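(* Let $\mathfrak{s}$ be the probability measure on $\mathbb{R}$ whose moments are $\int x^n\,\mathfrak{s}(dx)=\frac{n^n}{n!}$, $n\ge0$. Then $\mathfrak{s}$ has a probability density function $\varphi_{\mathfrak{s}}$ supported on $[0,e]$, given in parametric form by \[ \varphi_{\mathfrak{s}}\!\left(\frac{\sin v}{v}\exp(v\cot v)\right)=\frac1\pi\,\frac{v^2\exp(-v\cot v)}{\sin v\,\big((1-v\cot v)^2+v^2\big)},\qquad 0<v<\pi . \]
   Context: The existence of a probability measure with moment sequence $\{n^n/n!\}_{n\ge0}$ is known (Młotkowski). The map $v\mapsto\frac{\sin v}{v}\exp(v\cot v)$ is a bijection of $(0,\pi)$ onto $(0,e)$. *)

theory Defs
  imports "HOL-Probability.Probability"
begin

end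

theory Submission
  imports Defs
begin


definition hh :: "nat \<Rightarrow> complex \<Rightarrow> complex" where
  "hh n z = exp (of_nat n * z) / z ^ n"

lemma Re_ofreal_cis: "Re (complex_of_real a * cis b) = a * cos b" by simp

lemma hh_series:
  assumes r: "r > 0"
  shows "(\<lambda>k. (real n * r)^k / fact k / r^n * cos ((real k - real n) * t))
           sums Re (hh n (complex_of_real r * cis t))"
proof -
  have "(\<lambda>k. (complex_of_real (real n * r) * cis t)^k /\<^sub>R fact k) sums exp (complex_of_real (real n * r) * cis t)"
    by (rule exp_converges)
  then have "(\<lambda>k. (complex_of_real (real n * r) * cis t)^k /\<^sub>R fact k * inverse ((complex_of_real r * cis t)^n))
     sums (exp (complex_of_real (real n * r) * cis t) * inverse ((complex_of_real r * cis t)^n))"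
    by (rule sums_mult2)
  then have "(\<lambda>k. Re ((complex_of_real (real n * r) * cis t)^k /\<^sub>R fact k * inverse ((complex_of_real r * cis t)^n)))
     sums Re (exp (complex_of_real (real n * r) * cis t) * inverse ((complex_of_real r * cis t)^n))"
    by (rule sums_Re)
  moreover have eq1: "Re ((complex_of_real (real n * r) * cis t)^k /\<^sub>R fact k * inverse ((complex_of_real r * cis t)^n))
      = (real n * r)^k / fact k / r^n * cos ((real k - real n) * t)" for k
  proof -
    have "(complex_of_real (real n * r) * cis t)^k /\<^sub>R fact k * inverse ((complex_of_real r * cis t)^n)
       = complex_of_real ((real n * r)^k / fact k / r^n) * (cis (real k * t) * cis (- (real n * t)))"
      using Complex.DeMoivre[of t k] Complex.DeMoivre[of t n]
      by (simp add: power_mult_distrib scaleR_conv_of_real field_simps cis_inverse[symmetric])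
    also have "\<dots> = complex_of_real ((real n * r)^k / fact k / r^n) * cis ((real k - real n) * t)"
      by (simp add: cis_mult left_diff_distrib)
    finally have E: "(complex_of_real (real n * r) * cis t)^k /\<^sub>R fact k * inverse ((complex_of_real r * cis t)^n) = complex_of_real ((real n * r)^k / fact k / r^n) * cis ((real k - real n) * t)" .
    show ?thesis unfolding E Re_ofreal_cis ..
  qed
  moreover have eq2: "exp (complex_of_real (real n * r) * cis t) * inverse ((complex_of_real r * cis t)^n)
       = hh n (complex_of_real r * cis t)"
    by (simp add: hh_def divide_inverse mult.assoc)
  ultimately show ?thesis by (simp only: eq1 eq2)
qed

lemma cos_int_integral:
  fixes k n :: nat
  shows "((\<lambda>t. cos ((real k - real n) * t)) has_integral (if k = n then pi else 0)) {0..pi}"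
proof (cases "k = n")
  case True
  then show ?thesis using has_integral_const_real[of "1::real" 0 pi] by simp
next
  case False
  define m where "m = real k - real n"
  have m0: "m \<noteq> 0" using False by (simp add: m_def)
  have "((\<lambda>t. cos (m * t)) has_integral (sin (m * pi) / m - sin (m * 0) / m)) {0..pi}"
    apply (rule fundamental_theorem_of_calculus)
     apply simp
    unfolding has_real_derivative_iff_has_vector_derivative[symmetric]
    using m0 by (auto intro!: derivative_eq_intros)
  moreover have "sin (m * pi) = 0"
  proof -
    have "m * pi = pi * of_int (int k - int n)" by (simp add: m_def)
    then show ?thesis by (simp only: sin_npi_int)
  qed
  ultimately show ?thesis using False by (simp add: m_def)
qed

lemma hh_circle_integral:
  assumes r: "r > 0"
  shows "((\<lambda>t. Re (hh n (complex_of_real r * cis t))) has_integral pi * (real n ^ n / fact n)) {0..pi}"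
proof -
  define a where "a k = (real n * r)^k / fact k / r^n" for k
  define f where "f k t = a k * cos ((real k - real n) * t)" for k t
  have sm: "summable a"
    unfolding a_def using summable_exp[of "real n * r"] by (intro summable_divide) (simp add: divide_inverse mult.commute)
  have "uniform_limit {0..pi} (\<lambda>N t. \<Sum>k<N. f k t) (\<lambda>t. suminf (\<lambda>k. f k t)) sequentially"
  proof (rule Weierstrass_m_test[OF _ sm])
    fix k t
    have "a k \<ge> 0" unfolding a_def using r by simp
    then show "norm (f k t) \<le> a k"
      unfolding f_def by (simp add: abs_mult mult_left_le)
  qed
  moreover have "suminf (\<lambda>k. f k t) = Re (hh n (complex_of_real r * cis t))" for t
    using hh_series[OF r, of n t] unfolding f_def a_def by (simp add: sums_iff)
  ultimately have U: "uniform_limit (cbox 0 pi) (\<lambda>N t. \<Sum>k<N. f k t) (\<lambda>t. Re (hh n (complex_of_real r * cis t))) sequentially"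
    by simp
  have C: "continuous_on (cbox 0 pi) (\<lambda>t. \<Sum>k<N. f k t)" for N
    unfolding f_def by (intro continuous_intros)
  obtain I J where I: "\<And>N. ((\<lambda>t. \<Sum>k<N. f k t) has_integral I N) (cbox 0 pi)"
    and J: "((\<lambda>t. Re (hh n (complex_of_real r * cis t))) has_integral J) (cbox 0 pi)"
    and IJ: "I \<longlonglongrightarrow> J"
    using uniform_limit_integral_cbox[OF U C] by auto
  have "((\<lambda>t. \<Sum>k<N. f k t) has_integral (\<Sum>k<N. a k * (if k = n then pi else 0))) {0..pi}" for N
    unfolding f_def by (intro has_integral_sum has_integral_mult_right cos_int_integral) auto
  then have IE: "I N = (\<Sum>k<N. a k * (if k = n then pi else 0))" for N
    using I[of N] by (simp add: has_integral_unique)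
  have SE: "(\<Sum>k<N. a k * (if k = n then pi else 0)) = a n * pi" if "N > n" for N
    using that by (simp add: if_distrib sum.If_cases)
  have "eventually (\<lambda>N. I N = a n * pi) sequentially"
    using IE SE by (auto simp: eventually_at_top_linorder intro!: exI[of _ "Suc n"])
  then have "I \<longlonglongrightarrow> a n * pi" by (rule tendsto_eventually)
  hence "J = a n * pi" using IJ LIMSEQ_unique by blast
  moreover have "a n * pi = pi * (real n ^ n / fact n)"
    unfolding a_def using r by (simp add: power_mult_distrib)
  ultimately show ?thesis using J by simp
qed



lemma hh_deriv [derivative_intros]:
  assumes "(g has_field_derivative g') (at x within S)" "g x \<noteq> 0"
  shows "((\<lambda>x. hh n (g x)) has_field_derivative (of_nat n * hh n (g x) * (g x - 1) / g x * g')) (at x within S)"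
proof -
  have "(hh n has_field_derivative (of_nat n * hh n (g x) * (g x - 1) / g x)) (at (g x))"
  proof (cases n)
    case 0
    have "hh 0 = (\<lambda>_. 1)" by (auto simp: hh_def fun_eq_iff)
    then show ?thesis using 0 by simp
  next
    case (Suc m)
    define y where "y = g x"
    have y0: "y \<noteq> 0" using assms(2) by (simp add: y_def)
    have e: "((\<lambda>z. exp (of_nat n * z)) has_field_derivative of_nat n * exp (of_nat n * y)) (at y)"
      by (auto intro!: derivative_eq_intros)
    have p: "((\<lambda>z. z ^ n) has_field_derivative of_nat n * y ^ (n - 1)) (at y)"
      by (rule derivative_eq_intros refl)+ simp
    have "((\<lambda>z. exp (of_nat n * z) / z ^ n) has_field_derivative
       (of_nat n * exp (of_nat n * y) * y ^ n - exp (of_nat n * y) * (of_nat n * y ^ (n - 1))) / (y ^ n * y ^ n)) (at y)"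
      by (rule DERIV_divide[OF e p]) (simp add: y0)
    moreover have "(of_nat n * exp (of_nat n * y) * y ^ n - exp (of_nat n * y) * (of_nat n * y ^ (n - 1))) / (y ^ n * y ^ n)
       = of_nat n * hh n y * (y - 1) / y"
      using y0 by (simp add: Suc hh_def field_simps)
    ultimately show ?thesis unfolding y_def[symmetric] by (simp add: hh_def[abs_def])
  qed
  from DERIV_chain2[OF this assms(1)] show ?thesis by simp
qed

definition zz :: "real \<Rightarrow> real \<Rightarrow> complex" where
  "zz v s = complex_of_real (v / sin v) * cis (v * s)"
definition kk :: "real \<Rightarrow> real" where "kk v = 1 / v - cot v"
definition DD :: "nat \<Rightarrow> real \<Rightarrow> real \<Rightarrow> complex" where
  "DD n v s = hh n (zz v s) * (1 + complex_of_real v * of_nat n * (zz v s - 1) * (complex_of_real (kk v) + \<i> * complex_of_real s))"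

lemma g_deriv:
  fixes v s :: real
  assumes "sin v \<noteq> 0" "v \<noteq> 0"
  shows "((\<lambda>w. w / sin w * exp (\<i> * (w * of_real s))) has_field_derivative
      (of_real v / sin (of_real v) * exp (\<i> * (of_real v * of_real s)) * (1 / of_real v - cos (of_real v) / sin (of_real v) + \<i> * of_real s))) (at (of_real v))"
proof -
  have s0: "sin (complex_of_real v) \<noteq> 0" using assms by (simp add: sin_of_real)
  have v0: "complex_of_real v \<noteq> 0" using assms by simp
  show ?thesis
    using s0 v0 by (auto intro!: derivative_eq_intros simp: field_simps)
qed
lemma zz_eq: "complex_of_real x / sin (complex_of_real x) * exp (\<i> * (complex_of_real x * complex_of_real s)) = zz x s"
  by (simp add: zz_def sin_of_real cis_conv_exp)

lemma zz_nz: "sin v \<noteq> 0 \<Longrightarrow> v \<noteq> 0 \<Longrightarrow> zz v s \<noteq> 0"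
  by (simp add: zz_def)

lemma F_deriv:
  fixes v s :: real
  assumes sv: "sin v \<noteq> 0" and v0: "v \<noteq> 0"
  shows "((\<lambda>v. complex_of_real v * hh n (zz v s)) has_vector_derivative DD n v s) (at v within U)"
proof -
  define Fc where "Fc w = w * hh n (w / sin w * exp (\<i> * (w * of_real s)))" for w
  have gz: "complex_of_real v / sin (complex_of_real v) * exp (\<i> * (complex_of_real v * complex_of_real s)) \<noteq> 0"
    unfolding zz_eq using zz_nz[OF sv v0] .
  have d: "(Fc has_field_derivative
     (1 * hh n (zz v s) + (of_nat n * hh n (zz v s) * (zz v s - 1) / zz v s *
        (zz v s * (1 / of_real v - cos (of_real v) / sin (of_real v) + \<i> * of_real s))) * of_real v)) (at (of_real v))"
    using DERIV_mult[OF DERIV_ident hh_deriv[OF g_deriv[OF sv v0, of s] gz, of n]]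
    unfolding Fc_def zz_eq by (simp add: mult.commute)
  have E: "1 * hh n (zz v s) + (of_nat n * hh n (zz v s) * (zz v s - 1) / zz v s *
        (zz v s * (1 / of_real v - cos (of_real v) / sin (of_real v) + \<i> * of_real s))) * of_real v
      = DD n v s"
    using zz_nz[OF sv v0] sv v0
    by (simp add: DD_def kk_def cot_def sin_of_real cos_of_real field_simps)
  have "((\<lambda>x. Fc (of_real x)) has_vector_derivative DD n v s) (at v within U)"
    using has_vector_derivative_real_field[OF d] unfolding E .
  moreover have "Fc (of_real x) = complex_of_real x * hh n (zz x s)" for x
    unfolding Fc_def zz_eq ..
  ultimately show ?thesis by simp
qed
definition XX :: "real \<Rightarrow> real" where "XX v = sin v / v * exp (v * cot v)"

lemma hh_real: "hh n (complex_of_real r) = complex_of_real (exp (real n * r) / r ^ n)"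
proof -
  have e: "exp (complex_of_nat n * complex_of_real r) = complex_of_real (exp (real n * r))"
    by (metis exp_of_real of_real_mult of_real_of_nat_eq)
  show ?thesis unfolding hh_def e by simp
qed

lemma hh_T:
  assumes sv: "sin v \<noteq> 0" and v0: "v \<noteq> 0"
  shows "hh n (zz v 1) = complex_of_real (XX v ^ n)"
proof -
  have re: "Re (of_nat n * zz v 1) = real n * (v * cot v)" by (simp add: zz_def cot_def)
  have im: "Im (of_nat n * zz v 1) = real n * v" using sv by (simp add: zz_def)
  have "exp (of_nat n * zz v 1) = exp (complex_of_real (real n * (v * cot v))) * cis (real n * v)"
    by (subst exp_eq_polar) (simp only: re im exp_of_real)
  moreover have "zz v 1 ^ n = complex_of_real ((v / sin v) ^ n) * cis (real n * v)"
    unfolding zz_def power_mult_distrib Complex.DeMoivre by simp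
  ultimately have "hh n (zz v 1) = (complex_of_real (exp (real n * (v * cot v))) * cis (real n * v)) /
      (complex_of_real ((v / sin v) ^ n) * cis (real n * v))"
    unfolding hh_def exp_of_real by simp
  also have "\<dots> = complex_of_real (exp (real n * (v * cot v))) / complex_of_real ((v / sin v) ^ n)"
    by (rule mult_divide_mult_cancel_right) simp
  also have "\<dots> = complex_of_real (exp (real n * (v * cot v)) / (v / sin v) ^ n)"
    by (rule of_real_divide[symmetric])
  also have "exp (real n * (v * cot v)) / (v / sin v) ^ n = XX v ^ n"
    unfolding XX_def using sv v0 by (simp add: power_mult_distrib power_divide exp_of_nat_mult[symmetric] field_simps)
  finally show ?thesis .
qed

definition Psi :: "nat \<Rightarrow> real \<Rightarrow> real \<Rightarrow> complex" where
  "Psi n v s = complex_of_real s * hh n (zz v s) - \<i> * complex_of_real (kk v) * hh n (zz v s)"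

lemma Psi_deriv:
  fixes v s :: real
  assumes sv: "sin v \<noteq> 0" and v0: "v \<noteq> 0"
  shows "(Psi n v has_vector_derivative DD n v s) (at s within S)"
proof -
  define r where "r = complex_of_real (v / sin v)"
  define Pc where "Pc w = w * hh n (r * exp (\<i> * (of_real v * w))) - \<i> * complex_of_real (kk v) * hh n (r * exp (\<i> * (of_real v * w)))" for w
  have zeq: "r * exp (\<i> * (of_real v * of_real x)) = zz v x" for x
    by (simp add: r_def zz_def cis_conv_exp)
  have gd: "((\<lambda>w. r * exp (\<i> * (of_real v * w))) has_field_derivative zz v s * (\<i> * of_real v)) (at (of_real s))"
    unfolding zeq[symmetric] by (auto intro!: derivative_eq_intros)
  have gz: "r * exp (\<i> * (of_real v * of_real s)) \<noteq> 0" unfolding zeq using zz_nz[OF sv v0] .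
  have d: "(Pc has_field_derivative
      (1 * hh n (zz v s) + (of_nat n * hh n (zz v s) * (zz v s - 1) / zz v s * (zz v s * (\<i> * of_real v))) * of_real s
       - \<i> * complex_of_real (kk v) * (of_nat n * hh n (zz v s) * (zz v s - 1) / zz v s * (zz v s * (\<i> * of_real v))))) (at (of_real s))"
    unfolding Pc_def
    using DERIV_diff[OF DERIV_mult[OF DERIV_ident hh_deriv[OF gd gz, of n]] DERIV_cmult[OF hh_deriv[OF gd gz, of n], of "\<i> * complex_of_real (kk v)"]]
    unfolding zeq by (simp add: mult.commute)
  have E: "1 * hh n (zz v s) + (of_nat n * hh n (zz v s) * (zz v s - 1) / zz v s * (zz v s * (\<i> * of_real v))) * of_real s
       - \<i> * complex_of_real (kk v) * (of_nat n * hh n (zz v s) * (zz v s - 1) / zz v s * (zz v s * (\<i> * of_real v)))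
     = DD n v s"
    using zz_nz[OF sv v0] by (simp add: DD_def field_simps)
  have "((\<lambda>x. Pc (of_real x)) has_vector_derivative DD n v s) (at s within S)"
    using has_vector_derivative_real_field[OF d] unfolding E .
  moreover have "Pc (of_real x) = Psi n v x" for x
    unfolding Pc_def Psi_def zeq ..
  ultimately show ?thesis by simp
qed

lemma DD_integral:
  assumes sv: "sin v \<noteq> 0" and v0: "v \<noteq> 0"
  shows "(DD n v has_integral (Psi n v 1 - Psi n v 0)) {0..1}"
  by (rule fundamental_theorem_of_calculus) (auto intro!: Psi_deriv sv v0)

lemma Re_Psi:
  assumes sv: "sin v \<noteq> 0" and v0: "v \<noteq> 0"
  shows "Re (Psi n v 1 - Psi n v 0) = XX v ^ n"
proof -
  have "zz v 0 = complex_of_real (v / sin v)" by (simp add: zz_def)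
  then show ?thesis
    unfolding Psi_def using hh_T[OF sv v0, of n] hh_real[of n "v / sin v"] by simp
qed
lemma DD_cont: "continuous_on ({0<..<pi} \<times> cbox 0 1) (\<lambda>(x, t). DD n x t)"
proof -
  have "continuous_on ({0<..<pi} \<times> cbox 0 1) (\<lambda>p. DD n (fst p) (snd p))"
    unfolding DD_def hh_def zz_def kk_def cot_def
    by (auto intro!: continuous_intros; metis sin_gt_zero less_irrefl)
  then show ?thesis by (simp add: case_prod_beta')
qed

lemma f_cont: "0 < v \<Longrightarrow> v < pi \<Longrightarrow> continuous_on (cbox 0 1) (\<lambda>s. complex_of_real v * hh n (zz v s))"
  unfolding hh_def zz_def
  by (auto intro!: continuous_intros; metis sin_gt_zero less_irrefl)

definition HH :: "nat \<Rightarrow> real \<Rightarrow> complex" where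
  "HH n v = integral {0..1} (\<lambda>s. complex_of_real v * hh n (zz v s))"
definition QQ :: "nat \<Rightarrow> real \<Rightarrow> real" where "QQ n v = Re (HH n v)"

lemma QQ_deriv:
  assumes "0 < v" "v < pi"
  shows "(QQ n has_real_derivative XX v ^ n) (at v)"
proof -
  have sv: "sin v \<noteq> 0" "v \<noteq> 0" using assms sin_gt_zero[of v] by auto
  have "((\<lambda>x. integral (cbox 0 1) (\<lambda>s. complex_of_real x * hh n (zz x s))) has_vector_derivative
          integral (cbox 0 1) (DD n v)) (at v within {0<..<pi})"
  proof (rule leibniz_rule_vector_derivative)
    fix x t assume "x \<in> {0<..<pi}" "t \<in> cbox (0::real) 1"
    then have "sin x \<noteq> 0" "x \<noteq> 0" using sin_gt_zero[of x] by auto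
    then show "((\<lambda>x. complex_of_real x * hh n (zz x t)) has_vector_derivative DD n x t) (at x within {0<..<pi})"
      by (rule F_deriv)
  next
    fix x assume "x \<in> {0<..<pi::real}"
    then show "(\<lambda>s. complex_of_real x * hh n (zz x s)) integrable_on cbox 0 1"
      by (intro integrable_continuous f_cont) auto
  qed (use assms DD_cont in auto)
  then have "(HH n has_vector_derivative integral {0..1} (DD n v)) (at v)"
    unfolding HH_def using assms by (simp add: at_within_open[of v "{0<..<pi}"])
  moreover have "integral {0..1} (DD n v) = Psi n v 1 - Psi n v 0"
    using DD_integral[OF sv] by (rule integral_unique)
  ultimately have "(HH n has_vector_derivative Psi n v 1 - Psi n v 0) (at v)" by simp
  from has_field_derivative_Re[OF this] show ?thesis
    unfolding QQ_def Re_Psi[OF sv] .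
qed
lemma g_cont: "r \<noteq> 0 \<Longrightarrow> continuous_on S (\<lambda>t. hh n (complex_of_real r * cis t))"
  unfolding hh_def by (auto intro!: continuous_intros)

lemma QQ_alt:
  assumes "0 < v" "v < pi"
  shows "((\<lambda>t. Re (hh n (complex_of_real (v / sin v) * cis t))) has_integral QQ n v) {0..v}"
proof -
  define g where "g t = hh n (complex_of_real (v / sin v) * cis t)" for t
  have sv: "sin v > 0" using assms sin_gt_zero by auto
  have "g integrable_on {0..v}" unfolding g_def
    using sv assms by (intro integrable_continuous_interval g_cont) simp
  then obtain G where G: "(g has_integral G) {0..v}" by blast
  from has_integral_stretch_real[OF G, of v] assms
  have "((\<lambda>x. g (v * x)) has_integral (1 / v) *\<^sub>R G) {0..1}"
    by (simp add: image_divide_atLeastAtMost)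
  from has_integral_mult_left[OF this, of "complex_of_real v"] assms
  have "((\<lambda>x. complex_of_real v * g (v * x)) has_integral G) {0..1}"
    by (simp add: scaleR_conv_of_real mult.commute)
  moreover have "g (v * x) = hh n (zz v x)" for x unfolding g_def zz_def ..
  ultimately have I: "((\<lambda>x. complex_of_real v * hh n (zz v x)) has_integral G) {0..1}" by simp
  have "HH n v = G" unfolding HH_def by (rule integral_unique[OF I])
  with has_integral_Re[OF G] show ?thesis unfolding g_def QQ_def by simp
qed

lemma norm_hh: "r > 0 \<Longrightarrow> norm (hh n (complex_of_real r * cis t)) = exp (real n * r * cos t) / r ^ n"
  by (simp add: hh_def norm_divide norm_mult norm_power)

lemma rho_ge1: "0 < v \<Longrightarrow> v < pi \<Longrightarrow> 1 \<le> v / sin v"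
  using sin_x_le_x[of v] sin_gt_zero[of v] by simp

lemma QQ_lim_pi: "(QQ n \<longlongrightarrow> pi * (real n ^ n / fact n)) (at_left pi)"
proof -
  define c where "c = pi * (real n ^ n / fact n)"
  have "((\<lambda>v. QQ n v - c) \<longlongrightarrow> 0) (at_left pi)"
  proof (rule Lim_null_comparison)
    show "((\<lambda>v. pi - v) \<longlongrightarrow> 0) (at_left pi)"
      by (auto intro!: tendsto_eq_intros)
    have "eventually (\<lambda>v. v \<in> {pi/2<..<pi}) (at_left pi)"
      by (rule eventually_at_left_real) simp
    then show "eventually (\<lambda>v. norm (QQ n v - c) \<le> pi - v) (at_left pi)"
    proof eventually_elim
      case (elim v)
      then have v: "0 < v" "v < pi" "pi/2 < v" by auto
      define r where "r = v / sin v"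
      have r1: "1 \<le> r" unfolding r_def using rho_ge1 v by auto
      define g where "g t = Re (hh n (complex_of_real r * cis t))" for t
      have gc: "continuous_on S g" for S unfolding g_def using r1 by (intro continuous_on_Re g_cont) simp
      obtain J where J: "(g has_integral J) {v..pi}"
        using integrable_continuous_interval[OF gc] by blast
      have A: "(g has_integral QQ n v) {0..v}" unfolding g_def r_def using QQ_alt[OF v(1,2)] .
      have I1: "(g has_integral QQ n v + J) {0..pi}"
        by (rule has_integral_combine[OF _ _ A J]) (use v in auto)
      have I2: "(g has_integral c) {0..pi}" unfolding g_def c_def
        using hh_circle_integral r1 by simp
      have "QQ n v + J = c" by (rule has_integral_unique[OF I1 I2])
      then have Jc: "J = c - QQ n v" by simp
      have "norm J \<le> 1 * Henstock_Kurzweil_Integration.content (cbox v pi)"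
      proof (rule has_integral_bound[of 1 g J v pi])
        show "(g has_integral J) (cbox v pi)" using J by simp
        fix t assume t: "t \<in> cbox v pi"
        then have "v \<le> t" "t \<le> pi" by auto
        then have "0 \<le> cos (pi - t)" using v by (intro cos_ge_zero) auto
        then have "cos t \<le> 0" by simp
        moreover have "0 \<le> real n * r" using r1 by simp
        ultimately have "real n * r * cos t \<le> 0" by (rule mult_nonneg_nonpos[rotated])
        then have e1: "exp (real n * r * cos t) \<le> 1" by simp
        have "1 \<le> r ^ n" using r1 by (simp add: one_le_power)
        with e1 have "exp (real n * r * cos t) \<le> 1 * r ^ n" by linarith
        have rp: "0 < r ^ n" using r1 by simp
        have "norm (g t) \<le> norm (hh n (complex_of_real r * cis t))"
          unfolding g_def real_norm_def by (rule abs_Re_le_cmod)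
        also have "\<dots> = exp (real n * r * cos t) / r ^ n" using r1 by (intro norm_hh) simp
        also have "\<dots> \<le> 1" using pos_divide_le_eq[OF rp] \<open>exp (real n * r * cos t) \<le> 1 * r ^ n\<close> by simp
        finally show "norm (g t) \<le> 1" .
      qed simp
      moreover have "Henstock_Kurzweil_Integration.content (cbox v pi) = pi - v" using v by simp
      ultimately have "\<bar>c - QQ n v\<bar> \<le> pi - v" using Jc by simp
      then show ?case by (simp add: abs_minus_commute)
    qed
  qed
  then show ?thesis unfolding c_def by (simp add: LIM_zero_iff)
qed
lemma QQ_lim_0: "(QQ n \<longlongrightarrow> 0) (at_right 0)"
proof (rule Lim_null_comparison)
  show "((\<lambda>v. v * exp (2 * real n)) \<longlongrightarrow> 0) (at_right 0)"
    by (auto intro!: tendsto_eq_intros)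
  have "((\<lambda>x. sin x / x::real) \<longlongrightarrow> 1) (at_right 0)"
    using sinc_at_0 by (rule filterlim_mono) (simp_all add: at_within_le_at)
  then have "eventually (\<lambda>x::real. sin x / x > 1/2) (at_right 0)"
    by (rule order_tendstoD) simp
  moreover have "eventually (\<lambda>v::real. v \<in> {0<..<pi}) (at_right 0)"
    by (rule eventually_at_right_real) simp
  ultimately show "eventually (\<lambda>v. norm (QQ n v) \<le> v * exp (2 * real n)) (at_right 0)"
  proof eventually_elim
    case (elim v)
    then have v: "0 < v" "v < pi" by auto
    have sv: "sin v > 0" using v sin_gt_zero by auto
    define r where "r = v / sin v"
    have r1: "1 \<le> r" unfolding r_def using rho_ge1 v by auto
    have r2: "r \<le> 2" unfolding r_def using elim sv v by (simp add: field_simps)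
    define g where "g t = Re (hh n (complex_of_real r * cis t))" for t
    have A: "(g has_integral QQ n v) (cbox 0 v)" unfolding g_def r_def using QQ_alt[OF v] by simp
    have "norm (QQ n v) \<le> exp (2 * real n) * Henstock_Kurzweil_Integration.content (cbox 0 v)"
    proof (rule has_integral_bound[OF _ A])
      fix t assume t: "t \<in> cbox 0 v"
      have rp: "0 < r ^ n" using r1 by simp
      have "norm (g t) \<le> norm (hh n (complex_of_real r * cis t))"
        unfolding g_def real_norm_def by (rule abs_Re_le_cmod)
      also have "\<dots> = exp (real n * r * cos t) / r ^ n" using r1 by (intro norm_hh) simp
      also have "\<dots> \<le> exp (real n * r * cos t) / 1"
        using r1 by (intro divide_left_mono) (simp_all add: one_le_power)
      also have "\<dots> = exp (real n * r * cos t)" by simp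
      also have "\<dots> \<le> exp (2 * real n)"
      proof -
        have "real n * r * cos t \<le> real n * r * 1" using r1 by (intro mult_left_mono) auto
        also have "\<dots> \<le> real n * 2" using r2 by (simp add: mult_left_mono)
        finally show ?thesis by simp
      qed
      finally show "norm (g t) \<le> exp (2 * real n)" .
    qed simp
    then show ?case using v by (simp add: mult.commute)
  qed
qed


lemma support_bound:
  fixes M :: "real measure" and B :: real
  assumes rd: "real_distribution M" and Bp: "B > 0"
    and int: "\<And>n. integrable M (\<lambda>x. x ^ (2 * n))"
    and mom: "\<And>n. integral\<^sup>L M (\<lambda>x. x ^ (2 * n)) \<le> B ^ (2 * n)"
  shows "AE x in M. \<bar>x\<bar> \<le> B"
proof -
  interpret real_distribution M by (rule rd)
  have null: "measure M {x \<in> space M. b \<le> \<bar>x\<bar>} = 0" if b: "b > B" for b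
  proof -
    have bp: "b > 0" using b Bp by simp
    have le: "measure M {x \<in> space M. b \<le> \<bar>x\<bar>} \<le> (B / b) ^ (2 * n)" for n
    proof -
      have "{x \<in> space M. b \<le> \<bar>x\<bar>} \<subseteq> {x \<in> space M. b ^ (2 * n) \<le> x ^ (2 * n)}"
      proof safe
        fix x assume "b \<le> \<bar>x\<bar>"
        then have "b ^ (2 * n) \<le> \<bar>x\<bar> ^ (2 * n)" using bp by (intro power_mono) auto
        also have "\<dots> = x ^ (2 * n)" by (simp add: power_even_abs)
        finally show "b ^ (2 * n) \<le> x ^ (2 * n)" .
      qed
      then have "measure M {x \<in> space M. b \<le> \<bar>x\<bar>} \<le> measure M {x \<in> space M. b ^ (2 * n) \<le> x ^ (2 * n)}"
        by (intro finite_measure_mono) auto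
      also have "\<dots> \<le> integral\<^sup>L M (\<lambda>x. x ^ (2 * n)) / b ^ (2 * n)"
        by (rule integral_Markov_inequality_measure[where A="space M"]) (use int bp in auto)
      also have "\<dots> \<le> B ^ (2 * n) / b ^ (2 * n)"
        using mom bp by (intro divide_right_mono) auto
      finally show ?thesis by (simp add: power_divide)
    qed
    have "(\<lambda>n. (B / b) ^ (2 * n)) \<longlonglongrightarrow> 0"
    proof -
      have "((\<lambda>n. ((B / b) ^ 2) ^ n) \<longlonglongrightarrow> 0)"
        using Bp b by (intro LIMSEQ_power_zero) (simp add: power_less_one_iff abs_less_iff)
      then show ?thesis by (simp add: power_mult)
    qed
    then have "measure M {x \<in> space M. b \<le> \<bar>x\<bar>} \<le> 0"
      by (intro tendsto_lowerbound[of "\<lambda>n. (B / b) ^ (2 * n)"]) (use le in auto)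
    then show ?thesis using measure_nonneg[of M] by (simp add: order.antisym)
  qed
  have "AE x in M. \<bar>x\<bar> < B + 1 / real (Suc k)" for k
  proof (rule AE_I')
    let ?N = "{x \<in> space M. B + 1 / real (Suc k) \<le> \<bar>x\<bar>}"
    have "?N \<in> sets M" by measurable
    moreover have "emeasure M ?N = 0"
      using null[of "B + 1 / real (Suc k)"] by (simp add: emeasure_eq_measure)
    ultimately show "?N \<in> null_sets M" by auto
  qed auto
  then have "AE x in M. \<forall>k. \<bar>x\<bar> < B + 1 / real (Suc k)" by (simp add: AE_all_countable)
  then show ?thesis
  proof eventually_elim
    case (elim x)
    show "\<bar>x\<bar> \<le> B"
    proof (rule ccontr)
      assume "\<not> \<bar>x\<bar> \<le> B"
      then have "0 < \<bar>x\<bar> - B" by simp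
      then obtain k where "1 / real (Suc k) < \<bar>x\<bar> - B" using nat_approx_posE by blast
      with elim[rule_format, of k] show False by simp
    qed
  qed
qed

lemma char_expand:
  fixes M :: "real measure" and B :: real
  assumes rd: "real_distribution M" and Bp: "B > 0"
    and sup: "AE x in M. \<bar>x\<bar> \<le> B"
    and int: "\<And>n. integrable M (\<lambda>x. x ^ n)"
  shows "char M t = (\<Sum>k. (\<i> * complex_of_real t) ^ k / fact k * complex_of_real (integral\<^sup>L M (\<lambda>x. x ^ k)))"
proof -
  interpret real_distribution M by (rule rd)
  define f where "f k x = (\<i> * complex_of_real t) ^ k / fact k * complex_of_real (x ^ k)" for k x
  have nf: "norm (f k x) = \<bar>t * x\<bar> ^ k / fact k" for k x
    unfolding f_def by (simp add: norm_mult norm_divide norm_power abs_mult power_mult_distrib)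
  have ex: "iexp (t * x) = (\<Sum>k. f k x)" for x
  proof -
    have "(\<lambda>k. (\<i> * complex_of_real (t * x)) ^ k /\<^sub>R fact k) sums iexp (t * x)"
      by (rule exp_converges)
    moreover have "(\<i> * complex_of_real (t * x)) ^ k /\<^sub>R fact k = f k x" for k
      unfolding f_def by (simp add: power_mult_distrib scaleR_conv_of_real field_simps)
    ultimately show ?thesis by (simp add: sums_iff)
  qed
  have intf: "integrable M (f k)" for k
    unfolding f_def by (intro integrable_mult_right integrable_of_real int)
  have sumf: "AE x in M. summable (\<lambda>k. norm (f k x))"
    unfolding nf using summable_exp[of "\<bar>t * x\<bar>" for x] by (simp add: divide_inverse mult.commute)
  have bnd: "(\<integral>x. norm (f k x) \<partial>M) \<le> (\<bar>t\<bar> * B) ^ k / fact k" for k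
  proof -
    have "(\<integral>x. norm (f k x) \<partial>M) \<le> (\<integral>x. (\<bar>t\<bar> * B) ^ k / fact k \<partial>M)"
    proof (rule integral_mono_AE)
      show "integrable M (\<lambda>x. norm (f k x))" using intf by auto
      show "integrable M (\<lambda>x. (\<bar>t\<bar> * B) ^ k / fact k)" by simp
      show "AE x in M. norm (f k x) \<le> (\<bar>t\<bar> * B) ^ k / fact k"
        using sup
      proof eventually_elim
        case (elim x)
        have "\<bar>t * x\<bar> ^ k \<le> (\<bar>t\<bar> * B) ^ k"
          using elim by (intro power_mono) (auto simp: abs_mult intro: mult_left_mono)
        then show ?case unfolding nf by (intro divide_right_mono) auto
      qed
    qed
    moreover have "prob UNIV = 1" using prob_space space_eq_univ by simp
    ultimately show ?thesis by simp
  qed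
  have sumi: "summable (\<lambda>k. \<integral>x. norm (f k x) \<partial>M)"
  proof (rule summable_comparison_test'[OF summable_exp[of "\<bar>t\<bar> * B"]])
    fix n :: nat assume "n \<ge> 0"
    show "norm (\<integral>x. norm (f n x) \<partial>M) \<le> inverse (fact n) * (\<bar>t\<bar> * B) ^ n"
      using bnd[of n] by (simp add: integral_nonneg_AE divide_inverse mult.commute)
  qed
  have "char M t = (\<integral>x. (\<Sum>k. f k x) \<partial>M)"
    unfolding char_def ex ..
  also have "\<dots> = (\<Sum>k. integral\<^sup>L M (f k))"
    by (rule integral_suminf[OF intf sumf sumi])
  also have "\<dots> = (\<Sum>k. (\<i> * complex_of_real t) ^ k / fact k * complex_of_real (integral\<^sup>L M (\<lambda>x. x ^ k)))"
    unfolding f_def by (simp only: integral_mult_right_zero integral_complex_of_real)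
  finally show ?thesis .
qed

lemma moments_unique:
  fixes M1 M2 :: "real measure" and B :: real
  assumes rd1: "real_distribution M1" and rd2: "real_distribution M2" and Bp: "B > 0"
    and int1: "\<And>n. integrable M1 (\<lambda>x. x ^ n)" and int2: "\<And>n. integrable M2 (\<lambda>x. x ^ n)"
    and eq: "\<And>n. integral\<^sup>L M1 (\<lambda>x. x ^ n) = integral\<^sup>L M2 (\<lambda>x. x ^ n)"
    and mom: "\<And>n. integral\<^sup>L M1 (\<lambda>x. x ^ (2 * n)) \<le> B ^ (2 * n)"
  shows "M1 = M2"
proof -
  have s1: "AE x in M1. \<bar>x\<bar> \<le> B" by (rule support_bound[OF rd1 Bp int1 mom])
  have s2: "AE x in M2. \<bar>x\<bar> \<le> B" by (rule support_bound[OF rd2 Bp int2]) (use mom eq in metis)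
  have "char M1 = char M2"
    using char_expand[OF rd1 Bp s1 int1] char_expand[OF rd2 Bp s2 int2] eq by (auto simp: fun_eq_iff)
  then show ?thesis by (rule Levy_uniqueness[OF rd1 rd2])
qed



lemma sin_gt_vcos:
  assumes "0 < v" "v < pi" shows "v * cos v < sin v"
proof -
  have "(\<lambda>x. sin x - x * cos x) 0 < (\<lambda>x. sin x - x * cos x) v"
  proof (rule DERIV_pos_imp_increasing_open[OF assms(1)])
    fix x assume x: "0 < x" "x < v"
    have "((\<lambda>x. sin x - x * cos x) has_real_derivative x * sin x) (at x)"
      by (auto intro!: derivative_eq_intros)
    moreover have "x * sin x > 0" using x assms sin_gt_zero[of x] by simp
    ultimately show "\<exists>y. ((\<lambda>x. sin x - x * cos x) has_real_derivative y) (at x) \<and> 0 < y" by blast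
  qed (auto intro!: continuous_intros)
  then show ?thesis by simp
qed

lemma XX_pos: "0 < v \<Longrightarrow> v < pi \<Longrightarrow> 0 < XX v"
  unfolding XX_def using sin_gt_zero[of v] by simp

lemma vcot_lt1: "0 < v \<Longrightarrow> v < pi \<Longrightarrow> v * cot v < 1"
  using sin_gt_vcos[of v] sin_gt_zero[of v] by (simp add: cot_def field_simps)

lemma XX_lt_e: assumes "0 < v" "v < pi" shows "XX v < exp 1"
proof -
  have a: "sin v / v \<le> 1" using sin_x_le_x[of v] assms by simp
  have b: "exp (v * cot v) < exp 1" using vcot_lt1[OF assms] by simp
  have "XX v = sin v / v * exp (v * cot v)" by (simp add: XX_def)
  also have "\<dots> \<le> 1 * exp (v * cot v)" using a by (intro mult_right_mono) auto
  also have "\<dots> < exp 1" using b by simp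
  finally show ?thesis .
qed

definition XXd :: "real \<Rightarrow> real" where
  "XXd v = - XX v * ((1 - v * cot v)\<^sup>2 + v\<^sup>2) / v"

lemma XX_deriv:
  assumes "0 < v" "v < pi" shows "(XX has_real_derivative XXd v) (at v)"
proof -
  have s: "sin v > 0" using sin_gt_zero assms by auto
  have XXe: "XX = (\<lambda>v. sin v / v * exp (v * cos v / sin v))"
    by (simp add: XX_def[abs_def] cot_def)
  have c2: "(cos v)\<^sup>2 = 1 - (sin v)\<^sup>2" by (simp add: cos_squared_eq)
  have cc: "cos v * cos v = 1 - sin v * sin v" using sin_cos_squared_add[of v] by (simp add: power2_eq_square)
  show ?thesis unfolding XXe
    using s assms
    apply (auto intro!: derivative_eq_intros)
    unfolding XXd_def XX_def cot_def
    using s assms cc by (simp add: field_simps power2_eq_square)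
qed

lemma XXd_neg: assumes "0 < v" "v < pi" shows "XXd v < 0"
proof -
  have "0 < XX v * ((1 - v * cot v)\<^sup>2 + v\<^sup>2) / v"
    using XX_pos[OF assms] assms by (intro divide_pos_pos mult_pos_pos) (auto intro: add_nonneg_pos)
  then show ?thesis unfolding XXd_def by simp
qed

lemma XX_cont: "0 < a \<Longrightarrow> b < pi \<Longrightarrow> continuous_on {a..b} XX"
  by (rule continuous_at_imp_continuous_on) (use XX_deriv[THEN DERIV_isCont] in auto)

lemma XX_decr: assumes "0 < a" "a < b" "b < pi" shows "XX b < XX a"
proof (rule DERIV_neg_imp_decreasing[OF assms(2)])
  fix x assume "a \<le> x" "x \<le> b"
  then show "\<exists>y. (XX has_real_derivative y) (at x) \<and> y < 0"
    using assms XX_deriv XXd_neg by (meson less_le_trans le_less_trans)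
qed

lemma XX_inj: "inj_on XX {0<..<pi}"
proof (rule inj_onI)
  fix x y assume x: "x \<in> {0<..<pi}" and y: "y \<in> {0<..<pi}" and e: "XX x = XX y"
  show "x = y"
  proof (rule ccontr)
    assume "x \<noteq> y"
    then consider "x < y" | "y < x" by linarith
    then show False
      using XX_decr[of x y] XX_decr[of y x] x y e by (cases; auto)
  qed
qed

lemma XX_image: assumes "0 < a" "a \<le> b" "b < pi" shows "XX ` {a..b} = {XX b..XX a}"
proof
  show "XX ` {a..b} \<subseteq> {XX b..XX a}"
  proof safe
    fix x assume "x \<in> {a..b}"
    then show "XX x \<in> {XX b..XX a}"
      using XX_decr[of a x] XX_decr[of x b] assms by (cases "x = a"; cases "x = b") (auto simp: less_imp_le)
  qed
  show "{XX b..XX a} \<subseteq> XX ` {a..b}"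
  proof
    fix y assume "y \<in> {XX b..XX a}"
    then obtain x where "a \<le> x" "x \<le> b" "XX x = y"
      using IVT2'[of XX b y a] XX_cont[of a b] assms by auto
    then show "y \<in> XX ` {a..b}" by auto
  qed
qed

definition Fv :: "real \<Rightarrow> real" where
  "Fv v = 1 / pi * (v\<^sup>2 * exp (- (v * cot v))) / (sin v * ((1 - v * cot v)\<^sup>2 + v\<^sup>2))"

lemma Fv_pos: "0 < v \<Longrightarrow> v < pi \<Longrightarrow> 0 < Fv v"
  unfolding Fv_def using sin_gt_zero[of v]
  by (intro divide_pos_pos mult_pos_pos) (auto intro: add_nonneg_pos)

lemma Fv_XXd: assumes "0 < v" "v < pi" shows "Fv v * (- XXd v) = 1 / pi"
proof -
  have s: "sin v > 0" using sin_gt_zero assms by auto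
  define Q where "Q = (1 - v * cot v)\<^sup>2 + v\<^sup>2"
  have q: "Q > 0" unfolding Q_def using assms by (auto intro: add_nonneg_pos)
  have e: "exp (- (v * cot v)) * exp (v * cot v) = 1" by (simp add: exp_minus)
  show ?thesis
    unfolding Fv_def XXd_def XX_def Q_def[symmetric] using s q assms e
    by (simp add: field_simps power2_eq_square)
qed

lemma XX_integral:
  assumes "0 < a" "a \<le> b" "b < pi"
  shows "((\<lambda>v. XX v ^ n) has_integral QQ n b - QQ n a) {a..b}"
proof (rule fundamental_theorem_of_calculus)
  fix x assume "x \<in> {a..b}"
  then have "0 < x" "x < pi" using assms by auto
  then show "(QQ n has_vector_derivative XX x ^ n) (at x within {a..b})"
    using QQ_deriv has_real_derivative_iff_has_vector_derivative has_field_derivative_at_within by blast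
qed (use assms in auto)

lemma XXd_cont: "0 < a \<Longrightarrow> b < pi \<Longrightarrow> continuous_on {a..b} XXd"
proof -
  assume ab: "0 < a" "b < pi"
  have "continuous_on {a..b} (\<lambda>v. - XX v * ((1 - v * (cos v / sin v))\<^sup>2 + v\<^sup>2) / v)"
    using ab XX_cont[OF ab]
    by (auto intro!: continuous_intros; metis sin_gt_zero less_irrefl less_le_trans le_less_trans)
  then show ?thesis unfolding XXd_def cot_def .
qed

definition Xinv :: "real \<Rightarrow> real" where "Xinv = the_inv_into {0<..<pi} XX"
definition phi :: "real \<Rightarrow> real" where
  "phi y = (if y \<in> XX ` {0<..<pi} then Fv (Xinv y) else 0)"

lemma phi_XX: "0 < v \<Longrightarrow> v < pi \<Longrightarrow> phi (XX v) = Fv v"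
  unfolding phi_def Xinv_def using the_inv_into_f_f[OF XX_inj] by auto

lemma phi_nonneg: "0 \<le> phi y"
proof (cases "y \<in> XX ` {0<..<pi}")
  case True
  then obtain v where "0 < v" "v < pi" "y = XX v" by auto
  then show ?thesis using phi_XX Fv_pos by (simp add: less_imp_le)
qed (simp add: phi_def)

lemma phi_support: "y \<notin> {0<..<exp 1} \<Longrightarrow> phi y = 0"
  unfolding phi_def using XX_pos XX_lt_e by force



definition aa :: "nat \<Rightarrow> real" where "aa k = pi / (real k + 3)"
definition bb :: "nat \<Rightarrow> real" where "bb k = pi - aa k"

lemma aa_pos: "0 < aa k" unfolding aa_def by simp
lemma aa_lt_bb: "aa k < bb k"
proof -
  have "0 < pi + pi * real k" using pi_gt_zero by (simp add: add_pos_nonneg)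
  then have "2 * (pi / (real k + 3)) < pi" by (simp add: field_simps)
  then show ?thesis unfolding bb_def aa_def by simp
qed
lemma bb_lt_pi: "bb k < pi" unfolding bb_def using aa_pos by simp
lemma aa_mono: "aa (Suc k) \<le> aa k" unfolding aa_def by (simp add: frac_le)
lemma bb_mono: "bb k \<le> bb (Suc k)" unfolding bb_def using aa_mono by simp
lemma aa_lim: "aa \<longlonglongrightarrow> 0"
proof -
  have "filterlim (\<lambda>k. real k + 3) at_top sequentially"
    by (rule filterlim_at_top_mono[OF filterlim_real_sequentially]) simp
  then have "(\<lambda>k. inverse (real k + 3)) \<longlonglongrightarrow> 0" by (rule tendsto_inverse_0_at_top)
  from tendsto_mult[OF tendsto_const this, of pi] show ?thesis
    unfolding aa_def by (simp add: divide_inverse)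
qed
lemma bb_lim: "bb \<longlonglongrightarrow> pi"
  unfolding bb_def using tendsto_diff[OF tendsto_const aa_lim, of pi] by simp

definition KK :: "nat \<Rightarrow> real set" where "KK k = XX ` {aa k..bb k}"

lemma KK_eq: "KK k = {XX (bb k)..XX (aa k)}"
  unfolding KK_def using XX_image aa_pos aa_lt_bb bb_lt_pi by (simp add: less_imp_le)

lemma KK_sub: "KK k \<subseteq> XX ` {0<..<pi}"
  unfolding KK_def using aa_pos[of k] bb_lt_pi[of k] by (intro image_mono) auto

lemma KK_mono: "incseq KK"
proof (rule incseq_SucI)
  fix k show "KK k \<subseteq> KK (Suc k)"
    unfolding KK_def using aa_mono[of k] bb_mono[of k] by (intro image_mono) auto
qed

lemma KK_ev: assumes "0 < v" "v < pi" shows "eventually (\<lambda>k. XX v \<in> KK k) sequentially"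
proof -
  have "eventually (\<lambda>k. aa k < v) sequentially" by (rule order_tendstoD(2)[OF aa_lim assms(1)])
  moreover have "eventually (\<lambda>k. v < bb k) sequentially" by (rule order_tendstoD(1)[OF bb_lim assms(2)])
  ultimately show ?thesis by eventually_elim (auto simp: KK_def)
qed

lemma Xinv_XX: "0 < x \<Longrightarrow> x < pi \<Longrightarrow> Xinv (XX x) = x"
  unfolding Xinv_def using the_inv_into_f_f[OF XX_inj] by auto

lemma phi_meas: "phi \<in> borel_measurable borel"
proof (rule borel_measurable_LIMSEQ_real)
  define u where "u k y = indicator (KK k) y *\<^sub>R Fv (Xinv y)" for k y
  show "u k \<in> borel_measurable borel" for k
    unfolding u_def
  proof (rule borel_measurable_continuous_on_indicator)
    show "KK k \<in> sets borel" unfolding KK_eq by simp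
    have ab: "0 < aa k" "aa k \<le> bb k" "bb k < pi" using aa_pos[of k] aa_lt_bb[of k] bb_lt_pi[of k] by auto
    have ci: "continuous_on (KK k) Xinv"
      unfolding KK_def
    proof (rule continuous_on_inv)
      show "continuous_on {aa k..bb k} XX" using XX_cont ab by simp
      show "\<forall>x\<in>{aa k..bb k}. Xinv (XX x) = x" using Xinv_XX ab by auto
    qed simp
    have cf: "continuous_on {aa k..bb k} Fv"
      unfolding Fv_def cot_def using ab
      by (auto intro!: continuous_intros; metis sin_gt_zero less_irrefl less_le_trans le_less_trans)
    have "Xinv ` KK k \<subseteq> {aa k..bb k}" unfolding KK_def using Xinv_XX ab by auto
    then show "continuous_on (KK k) (\<lambda>y. Fv (Xinv y))"
      by (rule continuous_on_compose2[OF cf ci])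
  qed
  fix y :: real
  show "(\<lambda>k. u k y) \<longlonglongrightarrow> phi y"
  proof (cases "y \<in> XX ` {0<..<pi}")
    case True
    then obtain v where v: "0 < v" "v < pi" "y = XX v" by auto
    have "eventually (\<lambda>k. phi y = u k y) sequentially"
      using KK_ev[OF v(1,2)] unfolding v(3)[symmetric] by eventually_elim (simp add: u_def phi_def True)
    then show ?thesis by (rule Lim_transform_eventually[OF tendsto_const])
  next
    case False
    then have "y \<notin> KK k" for k using KK_sub[of k] by auto
    then have "u k y = phi y" for k using False by (simp add: u_def phi_def)
    then show ?thesis by simp
  qed
qed

lemma sub_k:
  "(\<integral>\<^sup>+ y. ennreal (y ^ n * phi y * indicator (KK k) y) \<partial>lborel) = ennreal ((QQ n (bb k) - QQ n (aa k)) / pi)"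
proof -
  define a where "a = aa k"
  define b where "b = bb k"
  have ab: "0 < a" "a < b" "b < pi" unfolding a_def b_def using aa_pos aa_lt_bb bb_lt_pi by auto
  define f where "f y = y ^ n * phi y" for y
  have fm: "f \<in> borel_measurable borel" unfolding f_def using phi_meas by measurable
  have "(\<integral>\<^sup>+ x. ennreal (f x * indicator {XX (- (- b))..XX (- (- a))} x) \<partial>lborel) =
        (\<integral>\<^sup>+ x. ennreal (f (XX (- x)) * (- XXd (- x)) * indicator {- b..- a} x) \<partial>lborel)"
  proof (rule nn_integral_substitution[where g = "\<lambda>u. XX (- u)" and g' = "\<lambda>u. - XXd (- u)"])
    show "set_borel_measurable borel {XX (- (- b))..XX (- (- a))} f"
      unfolding set_borel_measurable_def using fm by measurable
    fix x assume x: "x \<in> {- b..- a}"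
    then have x': "0 < - x" "- x < pi" using ab by auto
    have "((\<lambda>u. XX (- u)) has_real_derivative XXd (- x) * (- 1)) (at x)"
      by (rule DERIV_chain2[OF XX_deriv[OF x'] DERIV_minus[OF DERIV_ident]])
    then show "((\<lambda>u. XX (- u)) has_real_derivative - XXd (- x)) (at x)" by simp
    show "0 \<le> - XXd (- x)" using XXd_neg[OF x'] by simp
  next
    have "continuous_on {-b..-a} (XXd \<circ> uminus)"
      using ab by (intro continuous_on_compose continuous_intros XXd_cont[THEN continuous_on_subset]) auto
    then show "continuous_on {- b..- a} (\<lambda>u. - XXd (- u))"
      by (intro continuous_intros) (simp add: o_def)
  qed (use ab in auto)
  also have "\<dots> = (\<integral>\<^sup>+ x. ennreal (indicator {- b..- a} x * (XX (- x) ^ n / pi)) \<partial>lborel)"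
  proof (intro nn_integral_cong)
    fix x :: real
    show "ennreal (f (XX (- x)) * - XXd (- x) * indicator {- b..- a} x) = ennreal (indicator {- b..- a} x * (XX (- x) ^ n / pi))"
    proof (cases "x \<in> {- b..- a}")
      case True
      then have x': "0 < - x" "- x < pi" using ab by auto
      have "f (XX (- x)) * - XXd (- x) = XX (- x) ^ n * (Fv (- x) * - XXd (- x))"
        unfolding f_def phi_XX[OF x'] by simp
      also have "\<dots> = XX (- x) ^ n / pi" using Fv_XXd[OF x'] by simp
      finally show ?thesis using True by simp
    qed simp
  qed
  also have "\<dots> = ennreal ((QQ n b - QQ n a) / pi)"
  proof (rule nn_integral_has_integral_lebesgue)
    show "\<And>x. x \<in> {- b..- a} \<Longrightarrow> 0 \<le> XX (- x) ^ n / pi"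
      using XX_pos ab by (auto intro!: divide_nonneg_pos zero_le_power less_imp_le)
    have "((\<lambda>v. XX v ^ n) has_integral QQ n b - QQ n a) {a..b}"
      using XX_integral ab by simp
    then have "((\<lambda>x. XX (- x) ^ n) has_integral QQ n b - QQ n a) {-b..-a}"
      by (rule has_integral_reflect_lemma_real)
    then show "((\<lambda>x. XX (- x) ^ n / pi) has_integral (QQ n b - QQ n a) / pi) {-b..-a}"
      by (rule has_integral_divide)
  qed
  finally show ?thesis unfolding f_def a_def b_def KK_eq by (simp add: mult.assoc)
qed

lemma f_nonneg: "0 \<le> y ^ n * phi y"
proof (cases "y \<in> XX ` {0<..<pi}")
  case True
  then have "0 < y" using XX_pos by auto
  then show ?thesis using phi_nonneg by simp
qed (simp add: phi_def)

lemma moment_nn: "(\<integral>\<^sup>+ y. ennreal (y ^ n * phi y) \<partial>lborel) = ennreal (real n ^ n / fact n)"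
proof -
  define f where "f y = y ^ n * phi y" for y
  have f0: "0 \<le> f y" for y unfolding f_def by (rule f_nonneg)
  define g where "g k y = ennreal (f y * indicator (KK k) y)" for k y
  have fm: "f \<in> borel_measurable borel" unfolding f_def using phi_meas by measurable
  have gm: "g k \<in> borel_measurable lborel" for k unfolding g_def KK_eq using fm by measurable
  have ginc: "incseq g"
  proof (rule incseq_SucI, rule le_funI)
    fix k y
    have "indicator (KK k) y \<le> (indicator (KK (Suc k)) y :: real)"
      using KK_mono[THEN incseq_SucD, of k] by (auto simp: indicator_def)
    then show "g k y \<le> g (Suc k) y" unfolding g_def using f0[of y]
      by (intro ennreal_leI mult_left_mono) auto
  qed
  have gsup: "(SUP k. g k y) = ennreal (f y)" for y
  proof (cases "y \<in> XX ` {0<..<pi}")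
    case True
    then obtain v where v: "0 < v" "v < pi" "y = XX v" by auto
    obtain k where "y \<in> KK k" using KK_ev[OF v(1,2)] v(3) eventually_sequentially by auto
    then have "g k y = ennreal (f y)" unfolding g_def by simp
    moreover have "g j y \<le> ennreal (f y)" for j unfolding g_def using f0[of y]
      by (intro ennreal_leI) (auto simp: indicator_def)
    moreover have "ennreal (f y) \<le> (SUP k. g k y)" using \<open>g k y = ennreal (f y)\<close> by (metis SUP_upper UNIV_I)
    ultimately show ?thesis by (intro antisym SUP_least) auto
  next
    case False
    then have "f y = 0" unfolding f_def phi_def by simp
    then show ?thesis unfolding g_def by simp
  qed
  have "(\<integral>\<^sup>+ y. ennreal (f y) \<partial>lborel) = (\<integral>\<^sup>+ y. (SUP k. g k y) \<partial>lborel)"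
    unfolding gsup ..
  also have "\<dots> = (SUP k. integral\<^sup>N lborel (g k))"
    by (rule nn_integral_monotone_convergence_SUP[OF ginc gm])
  finally have E: "(\<integral>\<^sup>+ y. ennreal (f y) \<partial>lborel) = (SUP k. integral\<^sup>N lborel (g k))" .
  have sinc: "incseq (\<lambda>k. integral\<^sup>N lborel (g k))"
    using ginc unfolding incseq_def le_fun_def by (blast intro: nn_integral_mono)
  have L1: "(\<lambda>k. integral\<^sup>N lborel (g k)) \<longlonglongrightarrow> (SUP k. integral\<^sup>N lborel (g k))"
    by (rule LIMSEQ_SUP[OF sinc])
  have gi: "integral\<^sup>N lborel (g k) = ennreal ((QQ n (bb k) - QQ n (aa k)) / pi)" for k
    unfolding g_def f_def by (rule sub_k)
  have fa: "filterlim aa (at_right 0) sequentially"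
    by (rule tendsto_imp_filterlim_at_right[OF aa_lim]) (simp add: aa_pos)
  have fb: "filterlim bb (at_left pi) sequentially"
    by (rule tendsto_imp_filterlim_at_left[OF bb_lim]) (simp add: bb_lt_pi)
  have qa: "(\<lambda>k. QQ n (aa k)) \<longlonglongrightarrow> 0" by (rule filterlim_compose[OF QQ_lim_0 fa])
  have qb: "(\<lambda>k. QQ n (bb k)) \<longlonglongrightarrow> pi * (real n ^ n / fact n)" by (rule filterlim_compose[OF QQ_lim_pi fb])
  have "(\<lambda>k. (QQ n (bb k) - QQ n (aa k)) / pi) \<longlonglongrightarrow> (pi * (real n ^ n / fact n) - 0) / pi"
    by (intro tendsto_divide tendsto_diff qa qb tendsto_const) simp
  then have L2: "(\<lambda>k. integral\<^sup>N lborel (g k)) \<longlonglongrightarrow> ennreal (real n ^ n / fact n)"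
    unfolding gi by (intro tendsto_ennrealI) simp
  show ?thesis using E LIMSEQ_unique[OF L1 L2] unfolding f_def by simp
qed

lemma pow_fact_le_exp: "real m ^ m / fact m \<le> exp 1 ^ m"
proof -
  have sm: "summable (\<lambda>k. real m ^ k / fact k)"
    using summable_exp[of "real m"] by (simp add: divide_inverse mult.commute)
  have "sum (\<lambda>k. real m ^ k / fact k) {m} \<le> (\<Sum>k. real m ^ k / fact k)"
    by (rule sum_le_suminf[OF sm]) auto
  also have "(\<Sum>k. real m ^ k / fact k) = exp (real m)"
    using exp_converges[of "real m"] by (simp add: sums_iff divide_inverse mult.commute)
  also have "\<dots> = exp 1 ^ m" using exp_of_nat_mult[of m 1] by simp
  finally show ?thesis by simp
qed

theorem proposition15:
  fixes M :: "real measure"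
  assumes "prob_space M"
    and "sets M = sets borel"
    and "\<And>n::nat. integrable M (\<lambda>x. x ^ n)"
    and "\<And>n::nat. integral\<^sup>L M (\<lambda>x. x ^ n) = real n ^ n / fact n"
  shows "\<exists>\<phi> :: real \<Rightarrow> real.
           \<phi> \<in> borel_measurable borel \<and>
           (\<forall>x. 0 \<le> \<phi> x) \<and>
           M = density lborel (\<lambda>x. ennreal (\<phi> x)) \<and>
           (\<forall>x. x \<notin> {0..exp 1} \<longrightarrow> \<phi> x = 0) \<and>
           (\<forall>v. 0 < v \<and> v < pi \<longrightarrow>
              \<phi> (sin v / v * exp (v * cot v)) =
                1 / pi * (v\<^sup>2 * exp (- (v * cot v))) /
                  (sin v * ((1 - v * cot v)\<^sup>2 + v\<^sup>2)))"
proof (intro exI conjI allI impI)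
  show "phi \<in> borel_measurable borel" by (rule phi_meas)
  show "0 \<le> phi x" for x by (rule phi_nonneg)
  show "phi x = 0" if "x \<notin> {0..exp 1}" for x using that by (intro phi_support) auto
  show "phi (sin v / v * exp (v * cot v)) =
     1 / pi * (v\<^sup>2 * exp (- (v * cot v))) / (sin v * ((1 - v * cot v)\<^sup>2 + v\<^sup>2))"
    if "0 < v \<and> v < pi" for v
    using phi_XX[of v] that unfolding XX_def Fv_def by simp
  define N where "N = density lborel (\<lambda>x. ennreal (phi x))"
  have mom: "(\<integral>\<^sup>+ x. ennreal (phi x * x ^ n) \<partial>lborel) = ennreal (real n ^ n / fact n)" for n
    using moment_nn[of n] by (simp add: mult.commute)
  have pm: "(\<lambda>x. phi x * x ^ n) \<in> borel_measurable lborel" for n using phi_meas by measurable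
  have pn: "0 \<le> phi x * x ^ n" for x n using f_nonneg[of x n] by (simp add: mult.commute)
  have ii: "integrable lborel (\<lambda>x. phi x * x ^ n) \<and> integral\<^sup>L lborel (\<lambda>x. phi x * x ^ n) = real n ^ n / fact n" for n
    using nn_integral_eq_integrable[OF pm, of n "real n ^ n / fact n"] mom[of n] pn by simp
  have sN: "sets N = sets borel" unfolding N_def by simp
  have rdN: "real_distribution N"
  proof (intro real_distribution.intro real_distribution_axioms.intro sN prob_spaceI)
    have "emeasure N (space N) = (\<integral>\<^sup>+ x. ennreal (phi x) * indicator (space N) x \<partial>lborel)"
      unfolding N_def by (rule emeasure_density) (use phi_meas in auto)
    also have "\<dots> = (\<integral>\<^sup>+ x. ennreal (phi x * x ^ 0) \<partial>lborel)"
      unfolding N_def by simp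
    also have "\<dots> = 1" using mom[of 0] by simp
    finally show "emeasure N (space N) = 1" .
  qed
  have iN: "integrable N (\<lambda>x. x ^ n)" for n
    unfolding N_def using ii[of n] phi_meas phi_nonneg by (subst integrable_density) auto
  have eN: "integral\<^sup>L N (\<lambda>x. x ^ n) = real n ^ n / fact n" for n
    unfolding N_def using ii[of n] phi_meas phi_nonneg by (subst integral_density) auto
  have rdM: "real_distribution M"
    using assms(1,2) by (intro real_distribution.intro real_distribution_axioms.intro)
  show "M = density lborel (\<lambda>x. ennreal (phi x))"
    unfolding N_def[symmetric]
  proof (rule moments_unique[OF rdM rdN, of "exp 1"])
    fix n :: nat
    show "integral\<^sup>L M (\<lambda>x. x ^ (2 * n)) \<le> exp 1 ^ (2 * n)"
      unfolding assms(4) using pow_fact_le_exp[of "2 * n"] by simp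
  qed (use assms(3,4) iN eN in auto)
qed
end
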